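(* Suppose Assumptions 1 and 4 hold. Let $\beta_E\in\big(0,\tfrac12\min\{\bar\chi,\tfrac1{2d^*}\}\big)$, $\delta>\frac1{2\beta_E}$, and let $\sigma,\gamma,\tau>0$ be such that $\bar\Phi-\delta I$ is positive semidefinite. Then, with respect to the inner product $\langle u,v\rangle_{\bar\Phi}=u^T\bar\Phi v$: (i) $\bar\Phi^{-1}\bar{\mathfrak A}$ is maximally monotone and $\mathcal T_1=(\mathrm{Id}+\bar\Phi^{-1}\bar{\mathfrak A})^{-1}$ is $\tfrac12$-averaged; (ii) $\bar\Phi^{-1}\bar{\mathfrak B}$ is $\delta\beta_E$-cocoercive and $\mathcal T_2=\mathrm{Id}-\bar\Phi^{-1}\bar{\mathfrak B}$ is $\frac1{2\delta\beta_E}$-averaged; (iii) $\mathcal T=\mathcal T_1\circ\mathcal T_2$ is $\frac{2\delta\beta_E}{4\delta\beta_E-1}$-averaged.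
   Context: Same setting as for the partial-decision operators: players $i=1,\dots,N$, $x_i\in\Omega_i\subseteq\mathbb R^{n_i}$, $\Omega=\prod\Omega_i\subseteq\mathbb R^n$, costs $f_i$ defined and $C^1$ in $x_i$ on $\mathbb R^n$, data $A_i\in\mathbb R^{m\times n_i}$, $b_i\in\mathbb R^m$, $X=\Omega\cap\{\sum A_ix_i=\sum b_i\}$. Assumption 1: each $\Omega_i$ closed convex with nonempty interior; $X$ and each $\{x_i\in\Omega_i:(x_i,x_{-i})\in X\}$ have nonempty relative interior; $f_i$ convex in $x_i$. Graph: connected undirected, $N$ nodes, $M$ arbitrarily oriented edges, incidence $V$ ($V_{il}=1$ if $e_l$ points to $i$, $-1$ if starts at $i$, $0$ else), $L=VV^T$, $d^*=\max_iL_{ii}$; $\mathbf V=V\otimes I_m$, $\mathbf L=L\otimes I_n$, $\mathbf A=\mathrm{diag}(A_i)$, $\mathbf b=\mathrm{col}(b_i)$. $\mathbf x=\mathrm{col}(x^{(1)},\dots,x^{(N)})\in\mathbb R^{Nn}$; $\mathcal R_i=[0_{n_i\times n_{<i}}\ I_{n_i}\ 0_{n_i\times n_{>i}}]$, $\mathcal R=\mathrm{diag}(\mathcal R_i)$; $\mathbf F(\mathbf x)=\mathrm{col}(\nabla_{x_i}f_i(x^{(i)}))_i$. Assumption 4: $\langle\mathbf x-\mathbf x',\mathcal R^T\mathbf F(\mathbf x)-\mathcal R^T\mathbf F(\mathbf x')\rangle\ge\bar\chi\|\mathbf F(\mathbf x)-\mathbf F(\mathbf x')\|^2$ for all $\mathbf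 x,\mathbf x'$, $\bar\chi>0$. $\bar{\mathfrak A}(\mathbf W)=\mathrm{col}(-\mathbf V\mathbf z-\mathbf A\mathcal R\mathbf x,\mathbf V^T\Lambda,\mathcal R^TN_\Omega(\mathcal R\mathbf x)+\mathcal R^T\mathbf A^T\Lambda)$, $\bar{\mathfrak B}(\mathbf W)=\mathrm{col}(\mathbf b,\mathbf 0,\mathcal R^T\mathbf F(\mathbf x)+\mathbf L\mathbf x)$, $\bar\Phi=\begin{pmatrix}\sigma^{-1}I&\mathbf V&\mathbf A\mathcal R\\ \mathbf V^T&\gamma^{-1}I&0\\ \mathcal R^T\mathbf A^T&0&\tau^{-1}I\end{pmatrix}$. $S$ is $\alpha$-averaged if $S=(1-\alpha)\mathrm{Id}+\alpha R$ with $R$ nonexpansive; $\beta$-cocoercive means $\langle u-v,Su-Sv\rangle\ge\beta\|Su-Sv\|^2$. *)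

theory Defs
  imports "HOL-Analysis.Analysis"
begin

text \<open>Coordinates of R^n are the finite type 'j; own j is the player owning coordinate j.
  R^{n_i} is identified with the coordinate subspace blk own i.\<close>

definition blk :: "('j::finite \<Rightarrow> 'p) \<Rightarrow> 'p \<Rightarrow> (real^'j) set" where
  "blk own i = {v. \<forall>j. own j \<noteq> i \<longrightarrow> v $ j = 0}"

definition proj :: "('j::finite \<Rightarrow> 'p) \<Rightarrow> 'p \<Rightarrow> real^'j \<Rightarrow> real^'j" where
  "proj own i y = (\<chi> j. if own j = i then y $ j else 0)"

text \<open>(u_i, x_{-i}): replace block i of x by (block i of) u.\<close>
definition replace_blk :: "('j::finite \<Rightarrow> 'p) \<Rightarrow> 'p \<Rightarrow> real^'j \<Rightarrow> real^'j \<Rightarrow> real^'j" where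
  "replace_blk own i x u = (\<chi> j. if own j = i then u $ j else x $ j)"

text \<open>Omega = product of the Omega_i.\<close>
definition OmegaSet :: "('j::finite \<Rightarrow> 'p) \<Rightarrow> ('p \<Rightarrow> (real^'j) set) \<Rightarrow> (real^'j) set" where
  "OmegaSet own Omi = {y. \<forall>i. proj own i y \<in> Omi i}"

text \<open>X = Omega \<inter> {sum A_i x_i = sum b_i}; A is the m x n matrix [A_1 ... A_N].\<close>
definition Xset :: "('j::finite \<Rightarrow> 'p::finite) \<Rightarrow> ('p \<Rightarrow> (real^'j) set) \<Rightarrow> real^'j^'c::finite
     \<Rightarrow> real^'c^'p \<Rightarrow> (real^'j) set" where
  "Xset own Omi A b = {y \<in> OmegaSet own Omi. A *v y = (\<Sum>i\<in>UNIV. b $ i)}"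

definition slice :: "('j::finite \<Rightarrow> 'p::finite) \<Rightarrow> ('p \<Rightarrow> (real^'j) set) \<Rightarrow> real^'j^'c::finite
     \<Rightarrow> real^'c^'p \<Rightarrow> 'p \<Rightarrow> real^'j \<Rightarrow> (real^'j) set" where
  "slice own Omi A b i x = {u \<in> Omi i. replace_blk own i x u \<in> Xset own Omi A b}"

definition normal_cone :: "'a::real_inner set \<Rightarrow> 'a \<Rightarrow> 'a set" where
  "normal_cone S y = (if y \<in> S then {g. \<forall>y'\<in>S. inner g (y' - y) \<le> 0} else {})"

text \<open>R : R^{Nn} -> R^n, picks x_i^{(i)}; RT is its transpose.\<close>
definition Rop :: "('j::finite \<Rightarrow> 'p::finite) \<Rightarrow> real^'j^'p \<Rightarrow> real^'j" where
  "Rop own x = (\<chi> j. x $ (own j) $ j)"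

definition RT :: "('j::finite \<Rightarrow> 'p::finite) \<Rightarrow> real^'j \<Rightarrow> real^'j^'p" where
  "RT own y = (\<chi> i. \<chi> j. if own j = i then y $ j else 0)"

text \<open>bold A = diag(A_i) : R^n -> R^{Nm}, and its transpose.\<close>
definition Aop :: "('j::finite \<Rightarrow> 'p::finite) \<Rightarrow> real^'j^'c::finite \<Rightarrow> real^'j \<Rightarrow> real^'c^'p" where
  "Aop own A y = (\<chi> i. \<chi> c. \<Sum>j\<in>{j. own j = i}. A $ c $ j * y $ j)"

definition AT :: "('j::finite \<Rightarrow> 'p::finite) \<Rightarrow> real^'j^'c::finite \<Rightarrow> real^'c^'p \<Rightarrow> real^'j" where
  "AT own A lam = (\<chi> j. \<Sum>c\<in>UNIV. A $ c $ j * lam $ (own j) $ c)"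

text \<open>F(x) = col(grad_{x_i} f_i(x^{(i)})), given the partial gradients gf i.\<close>
definition Fop :: "('j::finite \<Rightarrow> 'p::finite) \<Rightarrow> ('p \<Rightarrow> real^'j \<Rightarrow> real^'j) \<Rightarrow> real^'j^'p \<Rightarrow> real^'j" where
  "Fop own gf x = (\<chi> j. gf (own j) (x $ (own j)) $ j)"

text \<open>Edge e is oriented from tle e to hde e.\<close>
definition incid :: "('e \<Rightarrow> 'p) \<Rightarrow> ('e \<Rightarrow> 'p) \<Rightarrow> 'p \<Rightarrow> 'e \<Rightarrow> real" where
  "incid tle hde i e = (if hde e = i then 1 else if tle e = i then -1 else 0)"

definition Lap :: "('p \<Rightarrow> 'e::finite \<Rightarrow> real) \<Rightarrow> 'p \<Rightarrow> 'p \<Rightarrow> real" where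
  "Lap V i k = (\<Sum>e\<in>UNIV. V i e * V k e)"

definition dstar :: "('p::finite \<Rightarrow> 'e::finite \<Rightarrow> real) \<Rightarrow> real" where
  "dstar V = Max (range (\<lambda>i. Lap V i i))"

text \<open>bold V = V (x) I_m and its transpose; bold L = L (x) I_n.\<close>
definition Vop :: "('p::finite \<Rightarrow> 'e::finite \<Rightarrow> real) \<Rightarrow> real^'c^'e \<Rightarrow> real^'c^'p" where
  "Vop V z = (\<chi> i. \<Sum>e\<in>UNIV. V i e *\<^sub>R z $ e)"

definition VT :: "('p::finite \<Rightarrow> 'e::finite \<Rightarrow> real) \<Rightarrow> real^'c^'p \<Rightarrow> real^'c^'e" where
  "VT V lam = (\<chi> e. \<Sum>i\<in>UNIV. V i e *\<^sub>R lam $ i)"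

definition Lop :: "('p::finite \<Rightarrow> 'e::finite \<Rightarrow> real) \<Rightarrow> real^'j^'p \<Rightarrow> real^'j^'p" where
  "Lop V x = (\<chi> i. \<Sum>k\<in>UNIV. Lap V i k *\<^sub>R x $ k)"

definition connected_graph :: "('e \<Rightarrow> 'p) \<Rightarrow> ('e \<Rightarrow> 'p) \<Rightarrow> bool" where
  "connected_graph tle hde =
     (\<forall>i k. (i, k) \<in> ({(tle e, hde e) | e. True} \<union> {(hde e, tle e) | e. True})\<^sup>*)"

definition frakA :: "('j::finite \<Rightarrow> 'p::finite) \<Rightarrow> real^'j^'c::finite \<Rightarrow> ('p \<Rightarrow> 'e::finite \<Rightarrow> real)
    \<Rightarrow> (real^'j) set \<Rightarrow> (real^'c^'p) \<times> (real^'c^'e) \<times> (real^'j^'p)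
    \<Rightarrow> ((real^'c^'p) \<times> (real^'c^'e) \<times> (real^'j^'p)) set" where
  "frakA own A V Om W = (case W of (lam, z, x) \<Rightarrow>
     {(- Vop V z - Aop own A (Rop own x), VT V lam, RT own g + RT own (AT own A lam)) | g.
        g \<in> normal_cone Om (Rop own x)})"

definition frakB :: "('j::finite \<Rightarrow> 'p::finite) \<Rightarrow> ('p \<Rightarrow> real^'j \<Rightarrow> real^'j) \<Rightarrow> ('p \<Rightarrow> 'e::finite \<Rightarrow> real)
    \<Rightarrow> real^'c::finite^'p \<Rightarrow> (real^'c^'p) \<times> (real^'c^'e) \<times> (real^'j^'p)
    \<Rightarrow> (real^'c^'p) \<times> (real^'c^'e) \<times> (real^'j^'p)" where
  "frakB own gf V b W = (case W of (lam, z, x) \<Rightarrow> (b, 0, RT own (Fop own gf x) + Lop V x))"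

definition PhiOp :: "real \<Rightarrow> real \<Rightarrow> real \<Rightarrow> ('j::finite \<Rightarrow> 'p::finite) \<Rightarrow> real^'j^'c::finite
    \<Rightarrow> ('p \<Rightarrow> 'e::finite \<Rightarrow> real) \<Rightarrow> (real^'c^'p) \<times> (real^'c^'e) \<times> (real^'j^'p)
    \<Rightarrow> (real^'c^'p) \<times> (real^'c^'e) \<times> (real^'j^'p)" where
  "PhiOp sig gam tau own A V W = (case W of (lam, z, x) \<Rightarrow>
     ((1/sig) *\<^sub>R lam + Vop V z + Aop own A (Rop own x),
      VT V lam + (1/gam) *\<^sub>R z,
      RT own (AT own A lam) + (1/tau) *\<^sub>R x))"

definition psd :: "('a::real_inner \<Rightarrow> 'a) \<Rightarrow> bool" where
  "psd M = (\<forall>w. 0 \<le> inner w (M w))"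

definition pinner :: "('a::real_inner \<Rightarrow> 'a) \<Rightarrow> 'a \<Rightarrow> 'a \<Rightarrow> real" where
  "pinner P u v = inner u (P v)"

definition pnorm :: "('a::real_inner \<Rightarrow> 'a) \<Rightarrow> 'a \<Rightarrow> real" where
  "pnorm P u = sqrt (pinner P u u)"

definition p_monotone :: "('a::real_inner \<Rightarrow> 'a) \<Rightarrow> ('a \<Rightarrow> 'a set) \<Rightarrow> bool" where
  "p_monotone P S = (\<forall>u v a b. a \<in> S u \<longrightarrow> b \<in> S v \<longrightarrow> 0 \<le> pinner P (u - v) (a - b))"

definition p_max_monotone :: "('a::real_inner \<Rightarrow> 'a) \<Rightarrow> ('a \<Rightarrow> 'a set) \<Rightarrow> bool" where
  "p_max_monotone P S = (p_monotone P S \<and>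
     (\<forall>u a. (\<forall>v b. b \<in> S v \<longrightarrow> 0 \<le> pinner P (u - v) (a - b)) \<longrightarrow> a \<in> S u))"

definition p_nonexpansive :: "('a::real_inner \<Rightarrow> 'a) \<Rightarrow> ('a \<Rightarrow> 'a) \<Rightarrow> bool" where
  "p_nonexpansive P R = (\<forall>u v. pnorm P (R u - R v) \<le> pnorm P (u - v))"

definition p_averaged :: "('a::real_inner \<Rightarrow> 'a) \<Rightarrow> real \<Rightarrow> ('a \<Rightarrow> 'a) \<Rightarrow> bool" where
  "p_averaged P \<alpha> T = (\<exists>R. p_nonexpansive P R \<and> (\<forall>u. T u = (1 - \<alpha>) *\<^sub>R u + \<alpha> *\<^sub>R R u))"

definition p_cocoercive :: "('a::real_inner \<Rightarrow> 'a) \<Rightarrow> real \<Rightarrow> ('a \<Rightarrow> 'a) \<Rightarrow> bool" where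
  "p_cocoercive P \<beta> T = (\<forall>u v. \<beta> * (pnorm P (T u - T v))\<^sup>2 \<le> pinner P (u - v) (T u - T v))"

text \<open>(Id + S)^{-1} as a set-valued map.\<close>
definition resolvent :: "('a::real_vector \<Rightarrow> 'a set) \<Rightarrow> 'a \<Rightarrow> 'a set" where
  "resolvent S u = {w. u \<in> (\<lambda>a. w + a) ` S w}"

end

theory Submission
  imports Defs
begin


lemma Vop_lin: "linear (Vop V)"
  by (rule linearI) (auto simp: Vop_def vec_eq_iff sum.distrib scaleR_add_right scaleR_sum_right mult_ac)
lemma VT_lin: "linear (VT V)"
  by (rule linearI) (auto simp: VT_def vec_eq_iff sum.distrib scaleR_add_right scaleR_sum_right mult_ac)
lemma Rop_lin: "linear (Rop own)"
  by (rule linearI) (auto simp: Rop_def vec_eq_iff)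
lemma RT_lin: "linear (RT own)"
  by (rule linearI) (auto simp: RT_def vec_eq_iff)
lemma Aop_lin: "linear (Aop own A)"
  by (rule linearI) (auto simp: Aop_def vec_eq_iff sum.distrib algebra_simps sum_distrib_left)
lemma AT_lin: "linear (AT own A)"
  by (rule linearI) (auto simp: AT_def vec_eq_iff sum.distrib algebra_simps sum_distrib_left)
lemma Lop_lin: "linear (Lop V)"
  by (rule linearI) (auto simp: Lop_def vec_eq_iff sum.distrib scaleR_add_right scaleR_sum_right mult_ac)

lemma RT_adj: "inner (RT own v) w = inner v (Rop own w)"
proof -
  have "inner (RT own v) w = (\<Sum>i\<in>UNIV. \<Sum>j\<in>UNIV. (if own j = i then v$j * w$i$j else 0))"
    unfolding inner_vec_def RT_def by (intro sum.cong refl) (simp add: inner_real_def)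
  also have "\<dots> = (\<Sum>j\<in>UNIV. \<Sum>i\<in>UNIV. (if own j = i then v$j * w$i$j else 0))"
    by (rule sum.swap)
  also have "\<dots> = inner v (Rop own w)"
    unfolding inner_vec_def Rop_def by (intro sum.cong refl) (simp add: sum.delta)
  finally show ?thesis .
qed
lemma Vop_adj:
  fixes z :: "real^'c::finite^'e::finite" and lam :: "real^'c^'p::finite"
  shows "inner (Vop V z) lam = inner z (VT V lam)"
proof -
  have "inner (Vop V z) lam = (\<Sum>i\<in>UNIV. \<Sum>e\<in>UNIV. V i e * inner (z$e) (lam$i))"
    unfolding inner_vec_def[where 'a="real^'c" and 'b='p] Vop_def by (simp add: inner_sum_left)
  also have "\<dots> = (\<Sum>e\<in>UNIV. \<Sum>i\<in>UNIV. V i e * inner (z$e) (lam$i))"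
    by (rule sum.swap)
  also have "\<dots> = inner z (VT V lam)"
    unfolding inner_vec_def[where 'a="real^'c" and 'b='e] VT_def by (simp add: inner_sum_right)
  finally show ?thesis .
qed

lemma sum_filter_UNIV: "(\<Sum>j\<in>{j::'a::finite. P j}. f j) = (\<Sum>j\<in>UNIV. if P j then f j else 0)"
  by (simp add: sum.If_cases)

lemma Aop_adj: "inner (Aop own A y) lam = inner y (AT own A lam)"
proof -
  have "inner (Aop own A y) lam = (\<Sum>i\<in>UNIV. \<Sum>c\<in>UNIV. \<Sum>j\<in>UNIV. (if own j = i then A$c$j * y$j * lam$i$c else 0))"
    unfolding inner_vec_def Aop_def
    by (intro sum.cong refl) (auto simp add: inner_real_def sum_distrib_right sum_filter_UNIV intro!: sum.cong)
  also have "\<dots> = (\<Sum>i\<in>UNIV. \<Sum>j\<in>UNIV. \<Sum>c\<in>UNIV. (if own j = i then A$c$j * y$j * lam$i$c else 0))"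
    by (intro sum.cong refl sum.swap)
  also have "\<dots> = (\<Sum>j\<in>UNIV. \<Sum>i\<in>UNIV. \<Sum>c\<in>UNIV. (if own j = i then A$c$j * y$j * lam$i$c else 0))"
    by (rule sum.swap)
  also have "\<dots> = (\<Sum>j\<in>UNIV. \<Sum>c\<in>UNIV. \<Sum>i\<in>UNIV. (if own j = i then A$c$j * y$j * lam$i$c else 0))"
    by (intro sum.cong refl sum.swap)
  also have "\<dots> = inner y (AT own A lam)"
    unfolding inner_vec_def AT_def
    by (intro sum.cong refl) (simp add: if_distrib sum.delta sum_distrib_left mult_ac cong: if_cong)
  finally show ?thesis .
qed

lemma Rop_RT: "Rop own (RT own v) = v"
  by (simp add: Rop_def RT_def vec_eq_iff)
lemma Lop_VV: "Lop V x = Vop V (VT V x)"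
proof -
  have "Lop V x $ i = Vop V (VT V x) $ i" for i
  proof -
    have "Lop V x $ i = (\<Sum>k\<in>UNIV. \<Sum>e\<in>UNIV. (V i e * V k e) *\<^sub>R x$k)"
      by (simp add: Lop_def Lap_def scaleR_sum_left)
    also have "\<dots> = (\<Sum>e\<in>UNIV. \<Sum>k\<in>UNIV. (V i e * V k e) *\<^sub>R x$k)"
      by (rule sum.swap)
    also have "\<dots> = Vop V (VT V x) $ i"
      by (simp add: Vop_def VT_def scaleR_sum_right)
    finally show ?thesis .
  qed
  then show ?thesis by (simp add: vec_eq_iff)
qed
lemma incid_abs: "\<bar>incid tle hde i e\<bar> * \<bar>incid tle hde i e\<bar> = \<bar>incid tle hde i e\<bar>"
  by (simp add: incid_def)

lemma incid_colsum:
  fixes tle hde :: "'e \<Rightarrow> 'p::finite"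
  assumes "tle e \<noteq> hde e"
  shows "(\<Sum>i\<in>UNIV. \<bar>incid tle hde i e\<bar>) = 2"
proof -
  have "(\<Sum>i\<in>UNIV. \<bar>incid tle hde i e\<bar>) = (\<Sum>i\<in>UNIV. (if i = hde e then 1 else 0) + (if i = tle e then 1 else 0))"
    using assms by (intro sum.cong refl) (auto simp: incid_def)
  also have "\<dots> = 2" by (simp add: sum.distrib)
  finally show ?thesis .
qed

lemma Lap_diag: "Lap (incid tle hde) i i = (\<Sum>e\<in>UNIV. \<bar>incid tle hde i e\<bar>)"
  unfolding Lap_def by (intro sum.cong refl) (simp add: incid_def)

lemma Lap_le_dstar: "Lap V i i \<le> dstar V"
  unfolding dstar_def by (rule Max_ge) auto

lemma row_bound:
  fixes y :: "'a::real_inner^'e::finite"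
  assumes "\<And>e. \<bar>w e\<bar> * \<bar>w e\<bar> = \<bar>w e\<bar>"
  shows "(norm (\<Sum>e\<in>UNIV. w e *\<^sub>R y$e))\<^sup>2 \<le> (\<Sum>e\<in>UNIV. \<bar>w e\<bar>) * (\<Sum>e\<in>UNIV. \<bar>w e\<bar> * (norm (y$e))\<^sup>2)"
proof -
  have "norm (\<Sum>e\<in>UNIV. w e *\<^sub>R y$e) \<le> (\<Sum>e\<in>UNIV. \<bar>w e\<bar> * norm (y$e))"
    by (rule order_trans[OF norm_sum]) simp
  hence "(norm (\<Sum>e\<in>UNIV. w e *\<^sub>R y$e))\<^sup>2 \<le> (\<Sum>e\<in>UNIV. \<bar>w e\<bar> * norm (y$e))\<^sup>2"
    by (rule power_mono) simp
  also have "(\<Sum>e\<in>UNIV. \<bar>w e\<bar> * norm (y$e)) = (\<Sum>e\<in>UNIV. \<bar>w e\<bar> * (\<bar>w e\<bar> * norm (y$e)))"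
    using assms by (simp add: mult.assoc[symmetric])
  also have "(\<dots>)\<^sup>2 \<le> (\<Sum>e\<in>UNIV. \<bar>w e\<bar>\<^sup>2) * (\<Sum>e\<in>UNIV. (\<bar>w e\<bar> * norm (y$e))\<^sup>2)"
    by (rule Cauchy_Schwarz_ineq_sum)
  also have "\<dots> = (\<Sum>e\<in>UNIV. \<bar>w e\<bar>) * (\<Sum>e\<in>UNIV. \<bar>w e\<bar> * (norm (y$e))\<^sup>2)"
  proof -
    have "\<bar>w e\<bar>\<^sup>2 = \<bar>w e\<bar>" "(\<bar>w e\<bar> * norm (y$e))\<^sup>2 = \<bar>w e\<bar> * (norm (y$e))\<^sup>2" for e
      using assms[of e] by (simp_all only: power_mult_distrib power2_eq_square[of "\<bar>w e\<bar>"])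
    then show ?thesis by simp
  qed
  finally show ?thesis .
qed
lemma inner_vec_sq: "inner (v::'a::real_inner^'b::finite) v = (\<Sum>i\<in>UNIV. (norm (v$i))\<^sup>2)"
  by (simp add: inner_vec_def power2_norm_eq_inner)

lemma Vop_bound:
  fixes tle hde :: "'e::finite \<Rightarrow> 'p::finite" and y :: "real^'j::finite^'e"
  assumes nl: "\<forall>e. tle e \<noteq> hde e"
  shows "inner (Vop (incid tle hde) y) (Vop (incid tle hde) y) \<le> 2 * dstar (incid tle hde) * inner y y"
proof -
  let ?V = "incid tle hde"
  have "inner (Vop ?V y) (Vop ?V y) = (\<Sum>i\<in>UNIV. (norm (\<Sum>e\<in>UNIV. ?V i e *\<^sub>R y$e))\<^sup>2)"
    by (simp add: inner_vec_sq Vop_def)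
  also have "\<dots> \<le> (\<Sum>i\<in>UNIV. dstar ?V * (\<Sum>e\<in>UNIV. \<bar>?V i e\<bar> * (norm (y$e))\<^sup>2))"
  proof (rule sum_mono)
    fix i
    have "(norm (\<Sum>e\<in>UNIV. ?V i e *\<^sub>R y$e))\<^sup>2 \<le> (\<Sum>e\<in>UNIV. \<bar>?V i e\<bar>) * (\<Sum>e\<in>UNIV. \<bar>?V i e\<bar> * (norm (y$e))\<^sup>2)"
      by (rule row_bound) (rule incid_abs)
    also have "\<dots> \<le> dstar ?V * (\<Sum>e\<in>UNIV. \<bar>?V i e\<bar> * (norm (y$e))\<^sup>2)"
      by (rule mult_right_mono) (use Lap_le_dstar[of ?V i] Lap_diag[of tle hde i] in \<open>auto intro: sum_nonneg\<close>)
    finally show "(norm (\<Sum>e\<in>UNIV. ?V i e *\<^sub>R y$e))\<^sup>2 \<le> dstar ?V * (\<Sum>e\<in>UNIV. \<bar>?V i e\<bar> * (norm (y$e))\<^sup>2)" .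
  qed
  also have "\<dots> = dstar ?V * (\<Sum>i\<in>UNIV. \<Sum>e\<in>UNIV. \<bar>?V i e\<bar> * (norm (y$e))\<^sup>2)"
    by (simp add: sum_distrib_left)
  also have "(\<Sum>i\<in>UNIV. \<Sum>e\<in>UNIV. \<bar>?V i e\<bar> * (norm (y$e))\<^sup>2) = (\<Sum>e\<in>UNIV. \<Sum>i\<in>UNIV. \<bar>?V i e\<bar> * (norm (y$e))\<^sup>2)"
    by (rule sum.swap)
  also have "\<dots> = (\<Sum>e\<in>UNIV. 2 * (norm (y$e))\<^sup>2)"
    by (intro sum.cong refl) (simp add: sum_distrib_right[symmetric] incid_colsum nl)
  also have "\<dots> = 2 * inner y y" by (simp add: inner_vec_sq sum_distrib_left)
  finally show ?thesis by (simp add: mult_ac)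
qed
lemma B_coco_std:
  fixes own :: "'j::finite \<Rightarrow> 'p::finite" and tle hde :: "'e::finite \<Rightarrow> 'p"
    and gf :: "'p \<Rightarrow> real^'j \<Rightarrow> real^'j" and x x' :: "real^'j^'p"
  assumes nl: "\<forall>e. tle e \<noteq> hde e"
    and asm4: "\<forall>x x'. chibar * (norm (Fop own gf x - Fop own gf x'))\<^sup>2
                   \<le> inner (x - x') (RT own (Fop own gf x) - RT own (Fop own gf x'))"
    and b0: "0 < betaE" and b1: "2 * betaE \<le> chibar" and b2: "4 * betaE * dstar (incid tle hde) \<le> 1"
  defines "D \<equiv> (RT own (Fop own gf x) + Lop (incid tle hde) x) - (RT own (Fop own gf x') + Lop (incid tle hde) x')"
  shows "betaE * inner D D \<le> inner (x - x') D"
proof -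
  let ?V = "incid tle hde"
  define dF where "dF = Fop own gf x - Fop own gf x'"
  define y where "y = VT ?V (x - x')"
  define a where "a = RT own dF"
  define b where "b = Vop ?V y"
  have Dab: "D = a + b"
    unfolding D_def a_def b_def y_def dF_def Lop_VV
    by (simp add: linear_diff[OF RT_lin] linear_diff[OF VT_lin] linear_diff[OF Vop_lin])
  have aa: "inner a a = (norm dF)\<^sup>2"
    unfolding a_def by (simp add: RT_adj Rop_RT power2_norm_eq_inner)
  have bb: "inner b b \<le> 2 * dstar ?V * inner y y"
    unfolding b_def by (rule Vop_bound[OF nl])
  have xb: "inner (x - x') b = inner y y"
    unfolding b_def y_def by (subst inner_commute) (rule Vop_adj)
  have xa: "chibar * (norm dF)\<^sup>2 \<le> inner (x - x') a"
    using asm4 unfolding a_def dF_def by (simp add: linear_diff[OF RT_lin])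
  have DD: "inner D D \<le> 2 * inner a a + 2 * inner b b"
  proof -
    have "0 \<le> inner (a - b) (a - b)" by simp
    then show ?thesis unfolding Dab by (simp add: inner_add inner_diff inner_commute)
  qed
  have yy: "0 \<le> inner y y" by simp
  have "betaE * inner D D \<le> betaE * (2 * inner a a + 2 * inner b b)"
    using DD b0 by (simp add: mult_left_mono)
  also have "\<dots> \<le> 2 * betaE * (norm dF)\<^sup>2 + 4 * betaE * dstar ?V * inner y y"
    using bb b0 aa by (simp add: algebra_simps)
  also have "\<dots> \<le> chibar * (norm dF)\<^sup>2 + 1 * inner y y"
    by (intro add_mono mult_right_mono b1 b2 yy) simp
  also have "\<dots> \<le> inner (x - x') D"
    using xa xb unfolding Dab by (simp add: inner_add_right)
  finally show ?thesis .
qed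



locale pform =
  fixes P :: "'a::euclidean_space \<Rightarrow> 'a" and dl :: real
  assumes lin: "linear P"
    and sym: "\<And>u v. inner u (P v) = inner (P u) v"
    and dpos: "dl > 0"
    and pd: "\<And>w. dl * inner w w \<le> inner w (P w)"
begin

lemma ip_diff_l[simp]: "pinner P (a - b) c = pinner P a c - pinner P b c"
  by (simp add: pinner_def inner_diff_left)
lemma ip_add_l[simp]: "pinner P (a + b) c = pinner P a c + pinner P b c"
  by (simp add: pinner_def inner_add_left)
lemma ip_scale_l[simp]: "pinner P (r *\<^sub>R a) c = r * pinner P a c"
  by (simp add: pinner_def)
lemma ip_diff_r[simp]: "pinner P c (a - b) = pinner P c a - pinner P c b"
  by (simp add: pinner_def linear_diff[OF lin] inner_diff_right)
lemma ip_add_r[simp]: "pinner P c (a + b) = pinner P c a + pinner P c b"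
  by (simp add: pinner_def linear_add[OF lin] inner_add_right)
lemma ip_scale_r[simp]: "pinner P c (r *\<^sub>R a) = r * pinner P c a"
  by (simp add: pinner_def linear_cmul[OF lin])
lemma ip_sym: "pinner P a b = pinner P b a"
  unfolding pinner_def by (subst sym) (rule inner_commute)
lemma ip_nonneg: "0 \<le> pinner P a a"
proof -
  have "0 \<le> dl * inner a a" using dpos by simp
  then show ?thesis using pd[of a] by (simp add: pinner_def)
qed
lemma ip_zero: "pinner P a a = 0 \<Longrightarrow> a = 0"
proof -
  assume "pinner P a a = 0"
  then have "dl * inner a a \<le> 0" using pd[of a] by (simp add: pinner_def)
  then have "inner a a \<le> 0" using dpos by (simp add: mult_le_0_iff)
  then show "a = 0" by (metis inner_ge_zero order_antisym inner_eq_zero_iff)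
qed
lemma pnorm_sq: "(pnorm P a)\<^sup>2 = pinner P a a"
  by (simp add: pnorm_def ip_nonneg)

lemma P_inj: "inj P"
proof -
  have "P w = 0 \<Longrightarrow> w = 0" for w
    using pd[of w] dpos by (simp add: mult_le_0_iff) (metis inner_ge_zero order_antisym inner_eq_zero_iff)
  then show ?thesis using lin by (simp add: linear_injective_0)
qed
lemma P_surj: "surj P"
  by (rule linear_injective_imp_surjective[OF lin P_inj]) simp
lemma P_inv[simp]: "P (inv P y) = y"
  using P_surj by (simp add: surj_f_inv_f)
lemma inv_P[simp]: "inv P (P y) = y"
  using P_inj by simp

lemma quad: "pinner P (a *\<^sub>R x + b *\<^sub>R y) (a *\<^sub>R x + b *\<^sub>R y)
   = a^2 * pinner P x x + 2*a*b*pinner P x y + b^2 * pinner P y y"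
  by (simp add: ip_sym[of y x] algebra_simps power2_eq_square)

lemma quad_diff: "pinner P (x - y) (x - y) = pinner P x x - 2 * pinner P x y + pinner P y y"
  by (simp add: ip_sym[of y x])

lemma avg_intro:
  assumes a0: "\<alpha> > 0"
    and c: "\<And>u v. pinner P (T u - T v) (T u - T v) - 2 * (1 - \<alpha>) * pinner P (u - v) (T u - T v)
                  + (1 - 2 * \<alpha>) * pinner P (u - v) (u - v) \<le> 0"
  shows "p_averaged P \<alpha> T"
  unfolding p_averaged_def
proof (intro exI conjI allI)
  define R where "R u = (1/\<alpha>) *\<^sub>R (T u - (1 - \<alpha>) *\<^sub>R u)" for u
  show "T u = (1 - \<alpha>) *\<^sub>R u + \<alpha> *\<^sub>R R u" for u
    using a0 by (simp add: R_def)
  show "p_nonexpansive P R"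
    unfolding p_nonexpansive_def pnorm_def
  proof (intro allI real_sqrt_le_mono)
    fix u v :: 'a
    define d where "d = u - v"
    define t where "t = T u - T v"
    have "R u - R v = (1/\<alpha>) *\<^sub>R (t - (1 - \<alpha>) *\<^sub>R d)"
      unfolding R_def t_def d_def by (simp add: scaleR_diff_right[symmetric] algebra_simps)
    also have "\<dots> = (1/\<alpha>) *\<^sub>R t + (-(1 - \<alpha>)/\<alpha>) *\<^sub>R d"
      by (simp add: scaleR_diff_right scaleR_minus_left[symmetric] minus_divide_left)
    finally have "R u - R v = (1/\<alpha>) *\<^sub>R t + (-(1 - \<alpha>)/\<alpha>) *\<^sub>R d" .
    hence "pinner P (R u - R v) (R u - R v) = (1/\<alpha>)^2 * pinner P t t + 2*(1/\<alpha>)*(-(1 - \<alpha>)/\<alpha>) * pinner P t d + (-(1 - \<alpha>)/\<alpha>)^2 * pinner P d d"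
      by (simp only: quad)
    also have "\<dots> = (1/\<alpha>)^2 * (pinner P t t - 2 * (1 - \<alpha>) * pinner P d t + (1 - 2 * \<alpha>) * pinner P d d) + pinner P d d"
      using a0 by (simp add: ip_sym[of t d] field_simps power2_eq_square)
    also have "\<dots> \<le> pinner P d d"
      using c[of u v] unfolding d_def[symmetric] t_def[symmetric]
      by (smt (verit) mult_nonneg_nonpos zero_le_power2)
    finally show "pinner P (R u - R v) (R u - R v) \<le> pinner P (u - v) (u - v)" unfolding d_def .
  qed
qed

end



lemma comp_real:
  fixes xx yy zz xy xz yz K :: real
  assumes K: "K > 1/2"
    and H1: "zz \<le> yz"
    and H2: "yy - 2*(1 - 1/(2*K))*xy + (1 - 2*(1/(2*K)))*xx \<le> 0"
    and H3: "0 \<le> (2*K-1)^2*(xx - 2*xy + yy) - 2*(2*K-1)*(xy - xz - yy + yz) + (yy - 2*yz + zz)"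
  shows "zz - 2*(1 - 2*K/(4*K-1))*xz + (1 - 2*(2*K/(4*K-1)))*xx \<le> 0"
proof -
  define k where "k = (2*K-1)/(2*K)"
  define Gk where "Gk = zz + k*(xx - 2*xz + zz) - xx"
  have K0: "K > 0" "4*K - 1 > 0" using K by auto
  have id1: "Gk = 2*(zz - yz) + 2*K*(yy - 2*(1 - 1/(2*K))*xy + (1 - 2*(1/(2*K)))*xx)
      - ((2*K-1)^2*(xx - 2*xy + yy) - 2*(2*K-1)*(xy - xz - yy + yz) + (yy - 2*yz + zz))/(2*K)"
    unfolding Gk_def k_def using K0 by (simp add: field_simps power2_eq_square)
  define a where "a = 2*K*(yy - 2*(1 - 1/(2*K))*xy + (1 - 2*(1/(2*K)))*xx)"
  define q where "q = ((2*K-1)^2*(xx - 2*xy + yy) - 2*(2*K-1)*(xy - xz - yy + yz) + (yy - 2*yz + zz))/(2*K)"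
  have "a \<le> 0"
    unfolding a_def using H2 K0 by (simp add: mult_nonneg_nonpos)
  moreover have "0 \<le> q"
    unfolding q_def using H3 K0 by simp
  moreover have "Gk = 2*(zz - yz) + a - q" unfolding id1 a_def q_def by simp
  ultimately have Gk0: "Gk \<le> 0" using H1 by (smt (verit))
  have id2: "zz - 2*(1 - 2*K/(4*K-1))*xz + (1 - 2*(2*K/(4*K-1)))*xx = (2*K/(4*K-1)) * Gk"
  proof -
    have ne: "4*K - 1 \<noteq> 0" "K \<noteq> 0" "2*K \<noteq> 0" using K0 by auto
    define c where "c = 2*K/(4*K-1)"
    have e1: "c * (1 + k) = 1" unfolding c_def k_def using ne by (simp add: field_simps)
    have e2: "c * k = 1 - c" unfolding c_def k_def using ne by (simp add: field_simps)
    have e3: "c * (k - 1) = 1 - 2*c" unfolding c_def k_def using ne by (simp add: field_simps)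
    have "c * Gk = (c * (1 + k)) * zz - 2 * (c * k) * xz + (c * (k - 1)) * xx"
      unfolding Gk_def by (simp add: algebra_simps)
    then have "c * Gk = zz - 2 * (1 - c) * xz + (1 - 2*c) * xx" unfolding e1 e2 e3 by simp
    then show ?thesis unfolding c_def by simp
  qed
  have "0 \<le> 2*K/(4*K-1)" using K0 by simp
  then show ?thesis unfolding id2 using Gk0 by (rule mult_nonneg_nonpos)
qed

context pform begin

lemma firm_avg:
  assumes "\<And>u v. pinner P (T u - T v) (T u - T v) \<le> pinner P (u - v) (T u - T v)"
  shows "p_averaged P (1/2) T"
  by (rule avg_intro) (use assms in auto)

lemma coco_cond:
  assumes K: "K > 1/2" and co: "p_cocoercive P K S"
  shows "pinner P ((u - S u) - (v - S v)) ((u - S u) - (v - S v))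
      - 2 * (1 - 1/(2*K)) * pinner P (u - v) ((u - S u) - (v - S v))
      + (1 - 2 * (1/(2*K))) * pinner P (u - v) (u - v) \<le> 0"
proof -
  define d where "d = u - v"
  define s where "s = S u - S v"
  have t: "(u - S u) - (v - S v) = d - s" by (simp add: d_def s_def)
  have cc: "K * pinner P s s \<le> pinner P d s"
    using co unfolding p_cocoercive_def by (simp add: pnorm_sq d_def s_def)
  have "pinner P (d - s) (d - s) - 2 * (1 - 1/(2*K)) * pinner P d (d - s) + (1 - 2 * (1/(2*K))) * pinner P d d
      = pinner P s s - (1/K) * pinner P d s"
    using K by (simp add: ip_sym[of s d] field_simps)
  also have "\<dots> \<le> 0" using cc K by (simp add: field_simps)
  finally show ?thesis unfolding t d_def[symmetric] .
qed

lemma coco_avg: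
  assumes K: "K > 1/2" and co: "p_cocoercive P K S"
  shows "p_averaged P (1/(2*K)) (\<lambda>u. u - S u)"
  by (rule avg_intro) (use K coco_cond[OF K co] in auto)

lemma comp_avg:
  assumes K: "K > 1/2"
    and f1: "\<And>u v. pinner P (T1 u - T1 v) (T1 u - T1 v) \<le> pinner P (u - v) (T1 u - T1 v)"
    and c2: "\<And>u v. pinner P (T2 u - T2 v) (T2 u - T2 v) - 2 * (1 - 1/(2*K)) * pinner P (u - v) (T2 u - T2 v)
                  + (1 - 2 * (1/(2*K))) * pinner P (u - v) (u - v) \<le> 0"
  shows "p_averaged P (2*K/(4*K-1)) (T1 \<circ> T2)"
proof (rule avg_intro)
  show "0 < 2*K/(4*K-1)" using K by simp
  fix u v :: 'a
  define x where "x = u - v"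
  define y where "y = T2 u - T2 v"
  define z where "z = T1 (T2 u) - T1 (T2 v)"
  have H1: "pinner P z z \<le> pinner P y z" using f1[of "T2 u" "T2 v"] by (simp add: y_def z_def)
  have H2: "pinner P y y - 2 * (1 - 1/(2*K)) * pinner P x y + (1 - 2 * (1/(2*K))) * pinner P x x \<le> 0"
    using c2[of u v] by (simp add: x_def y_def)
  have H3: "0 \<le> pinner P ((2*K-1) *\<^sub>R (x - y) - (y - z)) ((2*K-1) *\<^sub>R (x - y) - (y - z))"
    by (rule ip_nonneg)
  have H3': "pinner P ((2*K-1) *\<^sub>R (x - y) - (y - z)) ((2*K-1) *\<^sub>R (x - y) - (y - z))
     = (2*K-1)^2*(pinner P x x - 2*pinner P x y + pinner P y y) - 2*(2*K-1)*(pinner P x y - pinner P x z - pinner P y y + pinner P y z)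
       + (pinner P y y - 2*pinner P y z + pinner P z z)"
    by (simp add: ip_sym[of y x] ip_sym[of z x] ip_sym[of z y] algebra_simps power2_eq_square)
  have "pinner P z z - 2*(1 - 2*K/(4*K-1))*pinner P x z + (1 - 2*(2*K/(4*K-1)))*pinner P x x \<le> 0"
    by (rule comp_real[OF K H1 H2]) (use H3 H3' in simp)
  then show "pinner P ((T1 \<circ> T2) u - (T1 \<circ> T2) v) ((T1 \<circ> T2) u - (T1 \<circ> T2) v)
      - 2 * (1 - 2*K/(4*K-1)) * pinner P (u - v) ((T1 \<circ> T2) u - (T1 \<circ> T2) v)
      + (1 - 2 * (2*K/(4*K-1))) * pinner P (u - v) (u - v) \<le> 0"
    by (simp add: x_def z_def)
qed

end



lemma Phi_simp: "PhiOp sig gam tau own A V (l, z, x) =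
     ((1/sig) *\<^sub>R l + Vop V z + Aop own A (Rop own x),
      VT V l + (1/gam) *\<^sub>R z,
      RT own (AT own A l) + (1/tau) *\<^sub>R x)"
  by (simp add: PhiOp_def)

lemma Phi_lin:
  fixes own :: "'j::finite \<Rightarrow> 'p::finite" and A :: "real^'j^'c::finite" and V :: "'p \<Rightarrow> 'e::finite \<Rightarrow> real"
  shows "linear (PhiOp sig gam tau own A V)"
proof (rule linearI)
  fix a b :: "(real^'c^'p) \<times> (real^'c^'e) \<times> (real^'j^'p)"
  show "PhiOp sig gam tau own A V (a + b) = PhiOp sig gam tau own A V a + PhiOp sig gam tau own A V b"
    by (cases a; cases b)
       (simp add: PhiOp_def linear_add[OF Vop_lin] linear_add[OF VT_lin] linear_add[OF Rop_lin]
         linear_add[OF Aop_lin] linear_add[OF AT_lin] linear_add[OF RT_lin] algebra_simps)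
next
  fix r :: real and a :: "(real^'c^'p) \<times> (real^'c^'e) \<times> (real^'j^'p)"
  show "PhiOp sig gam tau own A V (r *\<^sub>R a) = r *\<^sub>R PhiOp sig gam tau own A V a"
    by (cases a)
       (simp add: PhiOp_def linear_cmul[OF Vop_lin] linear_cmul[OF VT_lin] linear_cmul[OF Rop_lin]
         linear_cmul[OF Aop_lin] linear_cmul[OF AT_lin] linear_cmul[OF RT_lin] algebra_simps)
qed

lemma adjV': "inner l (Vop V z) = inner (VT V l) z"
  by (metis Vop_adj inner_commute)
lemma adjAR: "inner l (Aop own A (Rop own x)) = inner (RT own (AT own A l)) x"
  by (metis Aop_adj RT_adj inner_commute)

lemma Phi_sym: "inner u (PhiOp sig gam tau own A V w) = inner (PhiOp sig gam tau own A V u) w"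
proof -
  obtain l z x where u: "u = (l, z, x)" by (cases u) auto
  obtain l' z' x' where w: "w = (l', z', x')" by (cases w) auto
  have 1: "inner (Vop V z) l' = inner (VT V l') z" by (metis Vop_adj inner_commute)
  have 2: "inner (Aop own A (Rop own x)) l' = inner (RT own (AT own A l')) x" by (metis adjAR inner_commute)
  have 3: "inner x (RT own (AT own A l')) = inner (RT own (AT own A l')) x" by (rule inner_commute)
  have 4: "inner z (VT V l') = inner (VT V l') z" by (rule inner_commute)
  show ?thesis unfolding u w Phi_simp
    apply (simp only: inner_Pair inner_add_left inner_add_right inner_scaleR_left inner_scaleR_right adjV' adjAR 1 2 3 4)
    done
qed

lemma nc_mono:
  assumes "g \<in> normal_cone S y" "g' \<in> normal_cone S y'"
  shows "0 \<le> inner (y - y') (g - g')"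
proof -
  have "y \<in> S" "y' \<in> S" "inner g (y' - y) \<le> 0" "inner g' (y - y') \<le> 0"
    using assms by (auto simp: normal_cone_def split: if_splits)
  then show ?thesis by (simp add: inner_diff inner_commute algebra_simps)
qed

lemma frakA_mono:
  assumes a: "a \<in> frakA own A V Om w" and a': "a' \<in> frakA own A V Om w'"
  shows "0 \<le> inner (w - w') (a - a')"
proof -
  obtain l z x where w: "w = (l, z, x)" by (cases w) auto
  obtain l' z' x' where w': "w' = (l', z', x')" by (cases w') auto
  obtain g where g: "g \<in> normal_cone Om (Rop own x)"
    and ag: "a = (- Vop V z - Aop own A (Rop own x), VT V l, RT own g + RT own (AT own A l))"
    using a unfolding w frakA_def by auto
  obtain g' where g': "g' \<in> normal_cone Om (Rop own x')"
    and ag': "a' = (- Vop V z' - Aop own A (Rop own x'), VT V l', RT own g' + RT own (AT own A l'))"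
    using a' unfolding w' frakA_def by auto
  define dl where "dl = l - l'"
  define dz where "dz = z - z'"
  define dx where "dx = x - x'"
  define dg where "dg = g - g'"
  have "a - a' = (- Vop V dz - Aop own A (Rop own dx), VT V dl, RT own dg + RT own (AT own A dl))"
    unfolding ag ag' dl_def dz_def dx_def dg_def
    by (simp add: linear_diff[OF Vop_lin] linear_diff[OF VT_lin] linear_diff[OF Rop_lin]
         linear_diff[OF Aop_lin] linear_diff[OF AT_lin] linear_diff[OF RT_lin] algebra_simps)
  moreover have "w - w' = (dl, dz, dx)" unfolding w w' dl_def dz_def dx_def by simp
  ultimately have "inner (w - w') (a - a') = inner (Rop own dx) dg"
    apply (simp only: inner_Pair inner_add_right inner_diff_right inner_minus_right adjV' adjAR)
    apply (simp add: inner_commute[of dz] inner_commute[of dx] RT_adj)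
    apply (rule inner_commute)
    done
  also have "\<dots> \<ge> 0"
    unfolding dx_def dg_def linear_diff[OF Rop_lin] by (rule nc_mono[OF g g'])
  finally show ?thesis by simp
qed


lemmas lins = linear_add[OF Vop_lin] linear_diff[OF Vop_lin] linear_cmul[OF Vop_lin] linear_neg[OF Vop_lin]
  linear_add[OF VT_lin] linear_diff[OF VT_lin] linear_cmul[OF VT_lin] linear_neg[OF VT_lin]
  linear_add[OF Rop_lin] linear_diff[OF Rop_lin] linear_cmul[OF Rop_lin] linear_neg[OF Rop_lin]
  linear_add[OF RT_lin] linear_diff[OF RT_lin] linear_cmul[OF RT_lin] linear_neg[OF RT_lin]
  linear_add[OF Aop_lin] linear_diff[OF Aop_lin] linear_cmul[OF Aop_lin] linear_neg[OF Aop_lin]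
  linear_add[OF AT_lin] linear_diff[OF AT_lin] linear_cmul[OF AT_lin] linear_neg[OF AT_lin]

lemma resolvent_exists:
  fixes own :: "'j::finite \<Rightarrow> 'p::finite" and A :: "real^'j^'c::finite" and V :: "'p \<Rightarrow> 'e::finite \<Rightarrow> real"
    and u :: "(real^'c^'p) \<times> (real^'c^'e) \<times> (real^'j^'p)"
  assumes Om: "closed Om" "convex Om" "Om \<noteq> {}"
    and pos: "sig > 0" "gam > 0" "tau > 0"
  shows "\<exists>w. PhiOp sig gam tau own A V (u - w) \<in> frakA own A V Om w"
proof -
  obtain l0 z0 x0 where u: "u = (l0, z0, x0)" by (cases u) auto
  define l where "l = l0 + sig *\<^sub>R (Vop V z0 + Aop own A (Rop own x0))"
  define z where "z = z0 - gam *\<^sub>R VT V (l + l - l0)"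
  define q where "q = AT own A (l + l - l0)"
  define p where "p = Rop own x0 - tau *\<^sub>R q"
  define y where "y = closest_point Om p"
  define x where "x = x0 + RT own (y - Rop own x0)"
  define g where "g = (1/tau) *\<^sub>R (p - y)"
  have Rx: "Rop own x = y" unfolding x_def by (simp add: lins Rop_RT)
  have yO: "y \<in> Om" unfolding y_def using closest_point_in_set[OF Om(1,3)] .
  have gN: "g \<in> normal_cone Om (Rop own x)"
    unfolding Rx normal_cone_def using yO
  proof (simp, intro ballI)
    fix y' assume "y' \<in> Om"
    have "inner (p - y) (y' - y) \<le> 0"
      unfolding y_def by (rule closest_point_dot[OF Om(2,1) \<open>y' \<in> Om\<close>])
    then show "inner g (y' - y) \<le> 0" unfolding g_def using pos
      by (simp add: divide_nonpos_pos)
  qed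
  have c1: "(1/sig) *\<^sub>R (l0 - l) + Vop V (z0 - z) + Aop own A (Rop own (x0 - x)) = - Vop V z - Aop own A (Rop own x)"
  proof -
    have "(1/sig) *\<^sub>R (l0 - l) = - (Vop V z0 + Aop own A (Rop own x0))"
      unfolding l_def using pos by simp
    then show ?thesis by (simp add: lins)
  qed
  have c2: "VT V (l0 - l) + (1/gam) *\<^sub>R (z0 - z) = VT V l"
  proof -
    have "(1/gam) *\<^sub>R (z0 - z) = VT V (l + l - l0)"
      unfolding z_def using pos by simp
    then show ?thesis by (simp only: lins) (simp add: algebra_simps)
  qed
  have c3: "RT own (AT own A (l0 - l)) + (1/tau) *\<^sub>R (x0 - x) = RT own g + RT own (AT own A l)"
  proof -
    have "(1/tau) *\<^sub>R (x0 - x) = RT own ((1/tau) *\<^sub>R (Rop own x0 - y))"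
      unfolding x_def by (simp add: lins)
    moreover have "RT own g = RT own ((1/tau) *\<^sub>R (Rop own x0 - y)) - RT own q"
      unfolding g_def p_def using pos by (simp only: lins) (simp add: algebra_simps)
    moreover have "RT own q = RT own (AT own A l) + RT own (AT own A l) - RT own (AT own A l0)"
      unfolding q_def by (simp only: lins)
    ultimately show ?thesis by (simp only: lins) (simp add: algebra_simps)
  qed
  show ?thesis
  proof (intro exI)
    show "PhiOp sig gam tau own A V (u - (l, z, x)) \<in> frakA own A V Om (l, z, x)"
      unfolding u frakA_def using gN c1 c2 c3 by (auto simp: Phi_simp)
  qed
qed




lemma proj_lin: "linear (proj own i)"
  by (rule linearI) (auto simp: proj_def vec_eq_iff)

lemma Omega_props:
  fixes own :: "'j::finite \<Rightarrow> 'p::finite"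
  assumes blk: "\<forall>i. Omi i \<subseteq> blk own i"
    and cc: "\<forall>i. closed (Omi i) \<and> convex (Omi i)"
    and ne: "\<forall>i. Omi i \<noteq> {}"
  shows "closed (OmegaSet own Omi)" "convex (OmegaSet own Omi)" "OmegaSet own Omi \<noteq> {}"
proof -
  have eq: "OmegaSet own Omi = (\<Inter>i. proj own i -` Omi i)"
    by (auto simp: OmegaSet_def)
  show "closed (OmegaSet own Omi)" unfolding eq
    using cc
    by (intro closed_INT ballI continuous_closed_vimage linear_continuous_at)
       (auto simp: linear_conv_bounded_linear[symmetric] proj_lin)
  show "convex (OmegaSet own Omi)" unfolding eq
    using cc proj_lin by (intro convex_INT convex_linear_vimage) auto
  have "\<forall>i. \<exists>y. y \<in> Omi i" using ne by blast
  then obtain ys where ys0: "\<forall>i. ys i \<in> Omi i" by metis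
  then have ys: "\<And>i. ys i \<in> Omi i" by blast
  define y where "y = (\<chi> j. ys (own j) $ j)"
  have "proj own i y = ys i" for i
    using ys[of i] blk unfolding proj_def y_def blk_def by (auto simp: vec_eq_iff)
  then have "y \<in> OmegaSet own Omi" using ys by (simp add: OmegaSet_def)
  then show "OmegaSet own Omi \<noteq> {}" by auto
qed

theorem lemma4:
  fixes own :: "'j::finite \<Rightarrow> 'p::finite"
    and Omi :: "'p \<Rightarrow> (real^'j) set"
    and f :: "'p \<Rightarrow> real^'j \<Rightarrow> real"
    and gf :: "'p \<Rightarrow> real^'j \<Rightarrow> real^'j"
    and A :: "real^'j^'c::finite"
    and b :: "real^'c^'p"
    and tle hde :: "'e::finite \<Rightarrow> 'p"
    and chibar betaE delta sig gam tau :: real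
  assumes Omi_blk: "\<forall>i. Omi i \<subseteq> blk own i"
    and Omi_cc: "\<forall>i. closed (Omi i) \<and> convex (Omi i)"
    and Omi_int: "\<forall>i. \<exists>y\<in>Omi i. \<exists>e>0. ball y e \<inter> blk own i \<subseteq> Omi i"
    and X_ri: "rel_interior (Xset own Omi A b) \<noteq> {}"
    and slice_ri: "\<forall>i x. slice own Omi A b i x \<noteq> {} \<longrightarrow> rel_interior (slice own Omi A b i x) \<noteq> {}"
    and f_convex: "\<forall>i x. convex_on (blk own i) (\<lambda>u. f i (replace_blk own i x u))"
    and gf_blk: "\<forall>i x. gf i x \<in> blk own i"
    and f_grad: "\<forall>i x. ((\<lambda>u. f i (replace_blk own i x u)) has_derivative (\<lambda>h. inner (gf i x) h))
                          (at (proj own i x) within blk own i)"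
    and gf_cont: "\<forall>i x. continuous_on (blk own i) (\<lambda>u. gf i (replace_blk own i x u))"
    and no_loops: "\<forall>e. tle e \<noteq> hde e"
    and simple: "inj (\<lambda>e. {tle e, hde e})"
    and conn: "connected_graph tle hde"
    and chi_pos: "chibar > 0"
    and asm4: "\<forall>x x'. chibar * (norm (Fop own gf x - Fop own gf x'))\<^sup>2
                   \<le> inner (x - x') (RT own (Fop own gf x) - RT own (Fop own gf x'))"
    and beta_pos: "0 < betaE"
    and beta_lt: "betaE < 1/2 * min chibar (1 / (2 * dstar (incid tle hde)))"
    and delta_gt: "delta > 1 / (2 * betaE)"
    and sig_pos: "sig > 0" and gam_pos: "gam > 0" and tau_pos: "tau > 0"
    and Phi_psd: "psd (\<lambda>W. PhiOp sig gam tau own A (incid tle hde) W - delta *\<^sub>R W)"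
  shows "p_max_monotone (PhiOp sig gam tau own A (incid tle hde))
           (\<lambda>W. inv (PhiOp sig gam tau own A (incid tle hde)) `
                  frakA own A (incid tle hde) (OmegaSet own Omi) W)
       \<and> (\<exists>T1. (\<forall>u. resolvent (\<lambda>W. inv (PhiOp sig gam tau own A (incid tle hde)) `
                                  frakA own A (incid tle hde) (OmegaSet own Omi) W) u = {T1 u})
              \<and> p_averaged (PhiOp sig gam tau own A (incid tle hde)) (1/2) T1
              \<and> p_cocoercive (PhiOp sig gam tau own A (incid tle hde)) (delta * betaE)
                  (\<lambda>W. inv (PhiOp sig gam tau own A (incid tle hde)) (frakB own gf (incid tle hde) b W))
              \<and> p_averaged (PhiOp sig gam tau own A (incid tle hde)) (1 / (2 * delta * betaE))
                  (\<lambda>W. W - inv (PhiOp sig gam tau own A (incid tle hde)) (frakB own gf (incid tle hde) b W))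
              \<and> p_averaged (PhiOp sig gam tau own A (incid tle hde))
                  (2 * delta * betaE / (4 * delta * betaE - 1))
                  (T1 \<circ> (\<lambda>W. W - inv (PhiOp sig gam tau own A (incid tle hde)) (frakB own gf (incid tle hde) b W))))"
proof -
  let ?V = "incid tle hde"
  let ?P = "PhiOp sig gam tau own A ?V"
  let ?Om = "OmegaSet own Omi"
  define S where "S W = inv ?P ` frakA own A ?V ?Om W" for W
  define B where "B W = inv ?P (frakB own gf ?V b W)" for W
  have dpos: "delta > 0"
    using delta_gt beta_pos by (smt (verit) divide_pos_pos)
  have pd: "delta * inner w w \<le> inner w (?P w)" for w
  proof -
    have "0 \<le> inner w (?P w - delta *\<^sub>R w)" using Phi_psd unfolding psd_def by blast
    then show ?thesis by (simp add: inner_diff_right)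
  qed
  interpret pf: pform ?P delta
    by (rule pform.intro) (rule Phi_lin, rule Phi_sym, rule dpos, rule pd)
  have Omi_ne: "\<forall>i. Omi i \<noteq> {}" using Omi_int by auto
  note Om = Omega_props[OF Omi_blk Omi_cc Omi_ne]
  have Smono: "p_monotone ?P S"
    unfolding p_monotone_def S_def
  proof (intro allI impI)
    fix u v a' b'
    assume "a' \<in> inv ?P ` frakA own A ?V ?Om u" "b' \<in> inv ?P ` frakA own A ?V ?Om v"
    then obtain a b where a: "a \<in> frakA own A ?V ?Om u" "a' = inv ?P a"
      and b: "b \<in> frakA own A ?V ?Om v" "b' = inv ?P b" by auto
    have "pinner ?P (u - v) (a' - b') = inner (u - v) (a - b)"
      unfolding a b pinner_def by (simp add: linear_diff[OF Phi_lin])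
    then show "0 \<le> pinner ?P (u - v) (a' - b')" using frakA_mono[OF a(1) b(1)] by simp
  qed
  have res_iff: "w \<in> resolvent S u \<longleftrightarrow> ?P (u - w) \<in> frakA own A ?V ?Om w" for u w
  proof
    assume "w \<in> resolvent S u"
    then obtain a where a: "a \<in> frakA own A ?V ?Om w" "u = w + inv ?P a"
      unfolding resolvent_def S_def by auto
    then have "?P (u - w) = a" by simp
    then show "?P (u - w) \<in> frakA own A ?V ?Om w" using a by simp
  next
    assume h: "?P (u - w) \<in> frakA own A ?V ?Om w"
    have "u = w + inv ?P (?P (u - w))" by simp
    then show "w \<in> resolvent S u" unfolding resolvent_def S_def using h by blast
  qed
  define T1 where "T1 u = (SOME w. ?P (u - w) \<in> frakA own A ?V ?Om w)" for u
  have T1P: "?P (u - T1 u) \<in> frakA own A ?V ?Om (T1 u)" for u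
    unfolding T1_def
    by (rule someI_ex) (rule resolvent_exists[OF Om sig_pos gam_pos tau_pos])
  have uniq: "w = w'" if "?P (u - w) \<in> frakA own A ?V ?Om w" "?P (u - w') \<in> frakA own A ?V ?Om w'" for u w w'
  proof -
    have "0 \<le> inner (w - w') (?P (u - w) - ?P (u - w'))" by (rule frakA_mono[OF that])
    also have "?P (u - w) - ?P (u - w') = - ?P (w - w')"
      by (simp add: linear_diff[OF Phi_lin] linear_neg[OF Phi_lin, symmetric] algebra_simps)
    finally have "pinner ?P (w - w') (w - w') \<le> 0" by (simp add: pinner_def)
    then have "pinner ?P (w - w') (w - w') = 0" using pf.ip_nonneg[of "w - w'"] by simp
    from pf.ip_zero[OF this] show ?thesis by simp
  qed
  have resT1: "resolvent S u = {T1 u}" for u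
    using res_iff T1P uniq by blast
  have firm: "pinner ?P (T1 u - T1 v) (T1 u - T1 v) \<le> pinner ?P (u - v) (T1 u - T1 v)" for u v
  proof -
    have "0 \<le> inner (T1 u - T1 v) (?P (u - T1 u) - ?P (v - T1 v))" by (rule frakA_mono[OF T1P T1P])
    also have "inner (T1 u - T1 v) (?P (u - T1 u) - ?P (v - T1 v)) = pinner ?P (T1 u - T1 v) ((u - v) - (T1 u - T1 v))"
      unfolding pinner_def by (simp add: linear_diff[OF Phi_lin, symmetric] algebra_simps)
    finally have h: "0 \<le> pinner ?P (T1 u - T1 v) ((u - v) - (T1 u - T1 v))" .
    have "pinner ?P (T1 u - T1 v) ((u - v) - (T1 u - T1 v)) = pinner ?P (T1 u - T1 v) (u - v) - pinner ?P (T1 u - T1 v) (T1 u - T1 v)"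
      by (rule pf.ip_diff_r)
    moreover have "pinner ?P (T1 u - T1 v) (u - v) = pinner ?P (u - v) (T1 u - T1 v)" by (rule pf.ip_sym)
    ultimately show ?thesis using h by linarith
  qed
  have maxm: "p_max_monotone ?P S"
    unfolding p_max_monotone_def
  proof (intro conjI Smono allI impI)
    fix u a
    assume h: "\<forall>v b. b \<in> S v \<longrightarrow> 0 \<le> pinner ?P (u - v) (a - b)"
    define w where "w = T1 (u + a)"
    have wP: "?P (u + a - w) \<in> frakA own A ?V ?Om w" unfolding w_def by (rule T1P)
    have bS: "u + a - w \<in> S w" unfolding S_def using wP by (metis image_eqI pf.inv_P)
    have "0 \<le> pinner ?P (u - w) (a - (u + a - w))" using h bS by blast
    also have "a - (u + a - w) = - (u - w)" by simp
    finally have "pinner ?P (u - w) (u - w) \<le> 0"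
      using pf.ip_scale_r[of "u - w" "-1" "u - w"] by simp
    then have "u = w" using pf.ip_nonneg[of "u - w"] pf.ip_zero[of "u - w"] by simp
    then show "a \<in> S u" using bS by simp
  qed
  have dstar_pos: "dstar ?V > 0"
  proof (rule ccontr)
    assume "\<not> ?thesis"
    then have "1 / (2 * dstar ?V) \<le> 0" by (simp add: divide_nonpos_nonneg)
    then have "min chibar (1 / (2 * dstar ?V)) \<le> 0" by (rule order_trans[OF min.cobounded2])
    then show False using beta_lt beta_pos by simp
  qed
  have b1: "2 * betaE \<le> chibar" using beta_lt by simp
  have b2: "4 * betaE * dstar ?V \<le> 1"
  proof -
    have "betaE < 1 / (4 * dstar ?V)" using beta_lt by simp
    then show ?thesis using dstar_pos by (simp add: field_simps)
  qed
  have coco: "p_cocoercive ?P (delta * betaE) B"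
    unfolding p_cocoercive_def
  proof (intro allI)
    fix u v :: "(real^'c^'p) \<times> (real^'c^'e) \<times> (real^'j^'p)"
    obtain l z x where u: "u = (l, z, x)" by (cases u) auto
    obtain l' z' x' where v: "v = (l', z', x')" by (cases v) auto
    define Dx where "Dx = (RT own (Fop own gf x) + Lop ?V x) - (RT own (Fop own gf x') + Lop ?V x')"
    define D where "D = frakB own gf ?V b u - frakB own gf ?V b v"
    have D: "D = (0, 0, Dx)" unfolding D_def Dx_def u v frakB_def by simp
    define y where "y = B u - B v"
    have Py: "?P y = D" unfolding y_def B_def D_def by (simp add: linear_diff[OF Phi_lin])
    have std: "betaE * inner D D \<le> inner (u - v) D"
      unfolding D u v using B_coco_std[OF no_loops asm4 beta_pos b1 b2, of x x'] unfolding Dx_def by simp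
    have n1: "delta * (norm y)^2 \<le> norm y * norm D"
      using pd[of y] Cauchy_Schwarz_ineq2[of y D] unfolding Py by (simp add: power2_norm_eq_inner)
    have n2: "delta * norm y \<le> norm D"
    proof (cases "norm y = 0")
      case True then show ?thesis by simp
    next
      case False then have "norm y > 0" by simp
      with n1 show ?thesis by (simp add: power2_eq_square)
    qed
    have "delta * inner y D \<le> delta * (norm y * norm D)"
      using Cauchy_Schwarz_ineq2[of y D] dpos by (intro mult_left_mono) (auto dest: abs_le_D1)
    also have "\<dots> \<le> norm D * norm D" using n2 by (simp add: mult.assoc[symmetric] mult_right_mono)
    also have "\<dots> = inner D D" by (simp add: power2_norm_eq_inner[symmetric] power2_eq_square)
    finally have "delta * inner y D \<le> inner D D" .
    then have "delta * betaE * inner y D \<le> betaE * inner D D"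
      using beta_pos by (smt (verit) mult.assoc mult.commute mult_left_mono)
    also have "\<dots> \<le> inner (u - v) D" by (rule std)
    finally have "delta * betaE * pinner ?P y y \<le> pinner ?P (u - v) y"
      by (simp add: pinner_def Py)
    then show "delta * betaE * (pnorm ?P (B u - B v))\<^sup>2 \<le> pinner ?P (u - v) (B u - B v)"
      by (simp add: pf.pnorm_sq y_def)
  qed
  have K: "delta * betaE > 1/2"
    using delta_gt beta_pos by (simp add: field_simps)
  have e1: "1 / (2 * delta * betaE) = 1 / (2 * (delta * betaE))" by (simp add: mult.assoc)
  have e2: "2 * delta * betaE / (4 * delta * betaE - 1) = 2 * (delta * betaE) / (4 * (delta * betaE) - 1)"
    by (simp add: mult.assoc)
  have T2avg: "p_averaged ?P (1 / (2 * delta * betaE)) (\<lambda>W. W - B W)"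
    unfolding e1 by (rule pf.coco_avg[OF K coco])
  have Tavg: "p_averaged ?P (2 * delta * betaE / (4 * delta * betaE - 1)) (T1 \<circ> (\<lambda>W. W - B W))"
    unfolding e2 by (rule pf.comp_avg[OF K firm pf.coco_cond[OF K coco]])
  have T1avg: "p_averaged ?P (1/2) T1" by (rule pf.firm_avg[OF firm])
  show ?thesis
    using maxm resT1 T1avg coco T2avg Tavg unfolding S_def B_def by blast
qed


end
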